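(* Let $X$ be a self-dense (no isolated points) compact metric space and let $f\colon X\to X$ be an inner-distal, totally transitive homeomorphism. Then the set $\operatorname{Per}(f)$ of periodic points of $f$ has empty interior.
   Context: The proximal cell of $x$ is $\mathcal{P}(x)=\{y\in X\colon \inf_{n\in\mathbb{Z}} d(f^n(x),f^n(y))=0\}$; $f$ is inner-distal if $\operatorname{Int}\mathcal{P}(x)=\emptyset$ for all $x$. A homeomorphism $g$ is transitive if some orbit $\{g^n(x)\colon n\in\mathbb{Z}\}$ is dense; $f$ is totally transitive if $f^n$ is transitive for every integer $n\ge1$. $\operatorname{Per}(f)=\{p\colon f^n(p)=p$ for some integer $n\ge1\}$. *)

theory Defs
  imports "HOL-Analysis.Analysis"
begin

definition zit :: "'a set \<Rightarrow> ('a \<Rightarrow> 'a) \<Rightarrow> int \<Rightarrow> 'a \<Rightarrow> 'a" where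
  "zit X f n = (if n \<ge> 0 then f ^^ nat n else (inv_into X f) ^^ nat (- n))"

definition proximal_cell :: "'a::metric_space set \<Rightarrow> ('a \<Rightarrow> 'a) \<Rightarrow> 'a \<Rightarrow> 'a set" where
  "proximal_cell X f x = {y \<in> X. (INF n\<in>(UNIV::int set). dist (zit X f n x) (zit X f n y)) = 0}"

definition inner_distal :: "'a::metric_space set \<Rightarrow> ('a \<Rightarrow> 'a) \<Rightarrow> bool" where
  "inner_distal X f \<longleftrightarrow> (\<forall>x\<in>X. (top_of_set X) interior_of (proximal_cell X f x) = {})"

definition transitive_homeo :: "'a::metric_space set \<Rightarrow> ('a \<Rightarrow> 'a) \<Rightarrow> bool" where
  "transitive_homeo X g \<longleftrightarrow> (\<exists>x\<in>X. closure {zit X g n x | n. True} = X)"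

definition totally_transitive :: "'a::metric_space set \<Rightarrow> ('a \<Rightarrow> 'a) \<Rightarrow> bool" where
  "totally_transitive X f \<longleftrightarrow> (\<forall>n::nat. n \<ge> 1 \<longrightarrow> transitive_homeo X (f ^^ n))"

definition periodic_points :: "'a set \<Rightarrow> ('a \<Rightarrow> 'a) \<Rightarrow> 'a set" where
  "periodic_points X f = {p \<in> X. \<exists>n::nat. n \<ge> 1 \<and> (f ^^ n) p = p}"

end

theory Submission
  imports Defs
begin

lemma fg_funpow:
  assumes fX: "\<And>z. z \<in> X \<Longrightarrow> f z \<in> X" and gf: "\<And>z. z \<in> X \<Longrightarrow> g (f z) = z"
  shows "z \<in> X \<Longrightarrow> (g ^^ k) ((f ^^ k) z) = z"
proof (induction k)
  case 0 then show ?case by simp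
next
  case (Suc k)
  have "(f ^^ k) z \<in> X" using Suc.prems fX by (induction k) auto
  then have "(g ^^ Suc k) ((f ^^ Suc k) z) = (g ^^ k) ((f ^^ k) z)"
  proof -
    have a: "(g ^^ Suc k) w = (g ^^ k) (g w)" for w by (simp add: funpow_Suc_right del: funpow.simps)
    have b: "(f ^^ Suc k) z = f ((f ^^ k) z)" by simp
    show ?thesis using a b gf \<open>(f ^^ k) z \<in> X\<close> by simp
  qed
  then show ?case using Suc by simp
qed

lemma inv_funpow:
  assumes "\<And>z. z \<in> S \<Longrightarrow> h z \<in> S" "z \<in> S"
  shows "(h ^^ k) z \<in> S"
  using assms by (induction k) auto

theorem theorem2p19:
  fixes X :: "'a::metric_space set" and f :: "'a \<Rightarrow> 'a"
  assumes "compact X"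
    and "\<forall>x\<in>X. x islimpt X"
    and "homeomorphism X X f (inv_into X f)"
    and "inner_distal X f"
    and "totally_transitive X f"
  shows "(top_of_set X) interior_of (periodic_points X f) = {}"
proof (rule ccontr)
  define g where "g = inv_into X f"
  have H: "\<forall>x\<in>X. g (f x) = x" "f ` X = X" "\<forall>y\<in>X. f (g y) = y" "g ` X = X"
    using assms(3) unfolding homeomorphism_def g_def by auto
  have fX: "\<And>z. z \<in> X \<Longrightarrow> f z \<in> X" and gX: "\<And>z. z \<in> X \<Longrightarrow> g z \<in> X"
    using H by auto
  have zX: "zit X f n z \<in> X" if "z \<in> X" for n z
    unfolding zit_def g_def[symmetric] using inv_funpow[OF fX that] inv_funpow[OF gX that] by auto
  assume "(top_of_set X) interior_of (periodic_points X f) \<noteq> {}"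
  then obtain u where u: "u \<in> (top_of_set X) interior_of (periodic_points X f)" by blast
  have "openin (top_of_set X) ((top_of_set X) interior_of (periodic_points X f))" by simp
  then obtain T where T: "open T" "(top_of_set X) interior_of (periodic_points X f) = T \<inter> X"
    by (metis openin_open Int_commute)
  have Usub: "(top_of_set X) interior_of (periodic_points X f) \<subseteq> periodic_points X f"
    by (rule interior_of_subset)
  have "transitive_homeo X (f ^^ 1)" using assms(5) unfolding totally_transitive_def by auto
  then obtain x where x: "x \<in> X" and cl: "closure {zit X f n x | n. True} = X"
    unfolding transitive_homeo_def by auto
  define Orb where "Orb = {zit X f n x | n. True}"
  have "u \<in> T \<inter> closure Orb" using u T cl Orb_def by auto
  then have "T \<inter> Orb \<noteq> {}" using open_Int_closure_eq_empty[OF T(1)] by blast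
  then obtain m where ym: "zit X f m x \<in> T" by (auto simp: Orb_def)
  define y where "y = zit X f m x"
  have yX: "y \<in> X" using zX[OF x] y_def by simp
  have "y \<in> periodic_points X f" using ym yX T Usub y_def by auto
  then obtain p where p: "p \<ge> 1" "(f ^^ p) y = y" unfolding periodic_points_def by auto
  define S where "S = {(f ^^ j) y | j. j < p}"
  have finS: "finite S" unfolding S_def by simp
  have yS: "y \<in> S" unfolding S_def using p by (auto intro!: exI[of _ 0])
  have fjX: "(f ^^ j) y \<in> X" for j using inv_funpow[OF fX yX] .
  have fS: "f z \<in> S" if zin: "z \<in> S" for z
  proof -
    obtain j where j: "j < p" "z = (f ^^ j) y" using zin unfolding S_def by auto
    show ?thesis
    proof (cases "Suc j < p")
      case True then show ?thesis unfolding S_def using j by (auto intro!: exI[of _ "Suc j"])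
    next
      case False then have "Suc j = p" using j by simp
      then have "f z = y" using j p by (metis funpow.simps(2) comp_apply)
      then show ?thesis using yS by simp
    qed
  qed
  have gS: "g z \<in> S" if zin: "z \<in> S" for z
  proof -
    obtain j where j: "j < p" "z = (f ^^ j) y" using zin unfolding S_def by auto
    show ?thesis
    proof (cases j)
      case 0
      obtain q where q: "p = Suc q" using p by (cases p) auto
      have "z = f ((f ^^ q) y)" using j 0 p q by simp
      then have "g z = (f ^^ q) y" using H fjX by simp
      then show ?thesis unfolding S_def using q by auto
    next
      case (Suc q)
      have "z = f ((f ^^ q) y)" using j Suc by simp
      then have "g z = (f ^^ q) y" using H fjX by simp
      then show ?thesis unfolding S_def using j Suc by auto
    qed
  qed
  have zS: "zit X f n z \<in> S" if "z \<in> S" for n z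
    unfolding zit_def g_def[symmetric] using inv_funpow[OF fS that] inv_funpow[OF gS that] by auto
  have xS: "x \<in> S"
  proof (cases "m \<ge> 0")
    case True
    then have "y = (f ^^ nat m) x" using y_def by (simp add: zit_def)
    then have "x = (g ^^ nat m) y" using fg_funpow[of X f g x "nat m"] fX H x by simp
    then show ?thesis using inv_funpow[OF gS yS] by simp
  next
    case False
    then have "y = (g ^^ nat (-m)) x" using y_def by (simp add: zit_def g_def)
    then have "x = (f ^^ nat (-m)) y" using fg_funpow[of X g f x "nat (-m)"] gX H x by simp
    then show ?thesis using inv_funpow[OF fS yS] by simp
  qed
  have "Orb \<subseteq> S" unfolding Orb_def using zS[OF xS] by auto
  then have "closure Orb \<subseteq> S" using finS by (metis closure_minimal finite_imp_closed)
  then have "finite X" using cl Orb_def finS finite_subset by auto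
  then show False using assms(2) x islimpt_finite by blast
qed

end
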